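(* Let $s\in\{1/2,1,3/2,\dots\}$, $N=2s$, and let $C,D$ be linear operators on $\mathcal{H}_s$ with Majorana polynomials $p_C,p_D$. Then \[ \mathrm{Tr}(CD)=(N!)^{-2}\,p_C(\partial^a,\partial_a)\,p_D(z_a,z^a), \] where $p_C(\partial^a,\partial_a)$ is the constant-coefficient differential operator obtained from $p_C(z_1,z_2,z^1,z^2)$ by replacing each $z_a$ by $\partial^a=\partial/\partial z^a$ and each $z^a$ by $\partial_a=\partial/\partial z_a$. In particular, if $\mathrm{Tr}(CD)=0$ then $p_C(\partial^a,\partial_a)p_D(z)=0$.
   Context: $\mathcal{H}_s$ is the spin-$s$ Hilbert space with orthonormal $S_z$-eigenbasis $\{|s,m\rangle\}_{m=-s}^{s}$. Treat $z_1,z_2,z^1,z^2$ as four independent complex variables (formally $z^a=\overline{z_a}$), with $\partial_a z_b=\partial^a z^b=\delta_{ab}$, $\partial_a z^b=\partial^a z_b=0$. Define $\langle -\mathbf n_B|=\sum_{m=-s}^{s}(-1)^{s-m}\sqrt{\binom{2s}{s-m}}\,z_1^{s+m}z_2^{s-m}\langle s,m|$ and $|-\mathbf n_B\rangle=\sum_{m=-s}^{s}(-1)^{s-m}\sqrt{\binom{2s}{s-m}}\,(z^1)^{s+m}(z^2)^{s-m}|s,m\rangle$. The Majorana polynomial of an operator $C$ on $\mathcal{H}_s$ is $p_C(z)=\langle -\mathbf n_B|C|-\mathbf n_B\rangle$. *)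

theory Defs
  imports Complex_Main "HOL-Library.Groups_Big_Fun"
begin

text \<open>Spin-s Hilbert space, N = 2s.  The basis vector |s,m> (m = -s..s) is indexed by
  i = s + m in {0..N}.  An operator C on H_s is given by its matrix entries
  C i j = <s, i - s| C |s, j - s>  (only i, j \<le> N are relevant).\<close>

definition op_trace :: "nat \<Rightarrow> (nat \<Rightarrow> nat \<Rightarrow> complex) \<Rightarrow> complex" where
  "op_trace N A = (\<Sum>i\<in>{0..N}. A i i)"

definition op_comp :: "nat \<Rightarrow> (nat \<Rightarrow> nat \<Rightarrow> complex) \<Rightarrow> (nat \<Rightarrow> nat \<Rightarrow> complex)
    \<Rightarrow> (nat \<Rightarrow> nat \<Rightarrow> complex)" where
  "op_comp N C D = (\<lambda>i k. \<Sum>j\<in>{0..N}. C i j * D j k)"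

text \<open>Polynomials in the four independent variables z_1, z_2, z^1, z^2, given by their
  (finitely supported) coefficient functions on exponent tuples (e1, e2, e3, e4),
  meaning the monomial z_1^e1 z_2^e2 (z^1)^e3 (z^2)^e4.\<close>

type_synonym expo = "nat \<times> nat \<times> nat \<times> nat"
type_synonym poly4 = "expo \<Rightarrow> complex"

definition monom4 :: "expo \<Rightarrow> complex \<Rightarrow> poly4" where
  "monom4 e c = (\<lambda>e'. if e' = e then c else 0)"

text \<open>Majorana polynomial p_C = <-n_B| C |-n_B>, with
  <-n_B| = sum_i (-1)^(N-i) sqrt(binom N (N-i)) z_1^i z_2^(N-i) <i|  and
  |-n_B> = sum_j (-1)^(N-j) sqrt(binom N (N-j)) (z^1)^j (z^2)^(N-j) |j>.\<close>

definition majorana :: "nat \<Rightarrow> (nat \<Rightarrow> nat \<Rightarrow> complex) \<Rightarrow> poly4" where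
  "majorana N C = (\<lambda>e. \<Sum>i\<in>{0..N}. \<Sum>j\<in>{0..N}.
      monom4 (i, N - i, j, N - j)
        (((-1) ^ (N - i) * complex_of_real (sqrt (real (N choose (N - i)))))
         * C i j
         * ((-1) ^ (N - j) * complex_of_real (sqrt (real (N choose (N - j)))))) e)"

text \<open>k-th derivative of x^n: coefficient n!/(n-k)! (and exponent n-k), zero if k > n.\<close>

definition dcoef :: "nat \<Rightarrow> nat \<Rightarrow> complex" where
  "dcoef n k = (if k \<le> n then of_nat (fact n div fact (n - k)) else 0)"

text \<open>The constant-coefficient operator obtained from the monomial
  z_1^a z_2^b (z^1)^c (z^2)^d by z_a \<mapsto> \<partial>^a = \<partial>/\<partial>z^a, z^a \<mapsto> \<partial>_a = \<partial>/\<partial>z_a, i.e.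
  (\<partial>/\<partial>z^1)^a (\<partial>/\<partial>z^2)^b (\<partial>/\<partial>z_1)^c (\<partial>/\<partial>z_2)^d, applied to the monomial
  z_1^e z_2^f (z^1)^g (z^2)^h; result given as a polynomial.\<close>

fun diff_monom :: "expo \<Rightarrow> expo \<Rightarrow> poly4" where
  "diff_monom (a, b, c, d) (e, f, g, h) =
     monom4 (e - c, f - d, g - a, h - b)
       (dcoef e c * dcoef f d * dcoef g a * dcoef h b)"

definition apply_diffop :: "poly4 \<Rightarrow> poly4 \<Rightarrow> poly4" where
  "apply_diffop p q = (\<lambda>m. Sum_any (\<lambda>(\<alpha>, \<beta>). p \<alpha> * q \<beta> * diff_monom \<alpha> \<beta> m))"

definition const4 :: "complex \<Rightarrow> poly4" where
  "const4 c = monom4 (0, 0, 0, 0) c"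

end

theory Submission
  imports Defs
begin

definition wt :: "nat \<Rightarrow> nat \<Rightarrow> complex" where
  "wt N i = (-1) ^ (N - i) * complex_of_real (sqrt (real (N choose (N - i))))"

definition idx :: "nat \<Rightarrow> nat \<Rightarrow> nat \<Rightarrow> expo" where
  "idx N i j = (i, N - i, j, N - j)"

lemma idx_eq: "i \<le> N \<Longrightarrow> i' \<le> N \<Longrightarrow> j \<le> N \<Longrightarrow> j' \<le> N \<Longrightarrow>
   (idx N i' j' = idx N i j) = (i' = i \<and> j' = j)"
  by (auto simp: idx_def)

lemma maj_alt: "majorana N C e = (\<Sum>i\<in>{0..N}. \<Sum>j\<in>{0..N}.
      monom4 (idx N i j) (wt N i * C i j * wt N j) e)"
  by (simp add: majorana_def wt_def idx_def)

lemma monom_idx: "i \<le> N \<Longrightarrow> i' \<le> N \<Longrightarrow> j \<le> N \<Longrightarrow> j' \<le> N \<Longrightarrow>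
   monom4 (idx N i' j') c (idx N i j) = (if i' = i then (if j' = j then c else 0) else 0)"
  by (simp add: monom4_def idx_eq)

lemma maj_at:
  assumes "i \<le> N" "j \<le> N"
  shows "majorana N C (idx N i j) = wt N i * C i j * wt N j"
proof -
  have "majorana N C (idx N i j) = (\<Sum>i'\<in>{0..N}. \<Sum>j'\<in>{0..N}.
      (if i' = i then (if j' = j then wt N i' * C i' j' * wt N j' else 0) else 0))"
    unfolding maj_alt
  proof (rule sum.cong[OF refl], rule sum.cong[OF refl])
    fix i' j' assume "i' \<in> {0..N}" "j' \<in> {0..N}"
    then show "monom4 (idx N i' j') (wt N i' * C i' j' * wt N j') (idx N i j) =
      (if i' = i then (if j' = j then wt N i' * C i' j' * wt N j' else 0) else 0)"
      using assms monom_idx by simp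
  qed
  also have "\<dots> = (\<Sum>i'\<in>{0..N}. if i' = i then (\<Sum>j'\<in>{0..N}. 
      (if j' = j then wt N i' * C i' j' * wt N j' else 0)) else 0)"
    by (rule sum.cong) auto
  also have "\<dots> = wt N i * C i j * wt N j"
    using assms by (simp add: sum.delta)
  finally show ?thesis .
qed

lemma maj_out:
  assumes "e \<notin> (\<lambda>(i,j). idx N i j) ` ({0..N} \<times> {0..N})"
  shows "majorana N C e = 0"
  unfolding maj_alt monom4_def
  by (rule sum.neutral, rule ballI, rule sum.neutral) (use assms in force)

lemma dm_at:
  assumes "i \<le> N" "j \<le> N" "k \<le> N" "l \<le> N"
  shows "diff_monom (idx N i j) (idx N k l) m =
    (if k = j \<and> l = i then monom4 (0,0,0,0)
       (of_nat (fact j * fact (N-j) * fact i * fact (N-i))) m else 0)"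
  using assms
  by (auto simp: idx_def dcoef_def monom4_def)

lemma wt_sq:
  assumes "i \<le> N"
  shows "wt N i * wt N i * of_nat (fact i * fact (N - i)) = of_nat (fact N)"
proof -
  have "wt N i * wt N i = of_nat (N choose (N - i))"
  proof -
    have "wt N i * wt N i = ((-1) ^ (N - i) * (-1) ^ (N - i)) *
        complex_of_real (sqrt (real (N choose (N - i))) * sqrt (real (N choose (N - i))))"
      unfolding wt_def of_real_mult by (simp only: mult_ac)
    also have "\<dots> = of_nat (N choose (N - i))"
    proof -
      have "sqrt (real (N choose (N - i))) * sqrt (real (N choose (N - i))) = real (N choose (N - i))"
        by simp
      moreover have "((-1::complex) ^ (N - i) * (-1) ^ (N - i)) = 1"
        by (simp add: power_add[symmetric])
      ultimately show ?thesis by simp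
    qed
    finally show ?thesis .
  qed
  moreover have "(N choose (N - i)) * (fact i * fact (N - i)) = fact N"
    using binomial_fact_lemma[OF assms] binomial_symmetric[OF assms]
    by (metis mult.commute)
  ultimately show ?thesis by (metis of_nat_mult)
qed


lemma inj_idx: "inj_on (\<lambda>(i,j). idx N i j) ({0..N} \<times> {0..N})"
  by (auto simp: inj_on_def idx_eq)

lemma key:
  "apply_diffop (majorana N C) (majorana N D) m =
     (if m = (0,0,0,0) then (of_nat (fact N))\<^sup>2 * op_trace N (op_comp N C D) else 0)"
proof -
  define S where "S = {0..N} \<times> {0..N}"
  define h where "h = (\<lambda>(i,j). idx N i j)"
  define A where "A = h ` S"
  define g where "g = (\<lambda>(\<alpha>, \<beta>). majorana N C \<alpha> * majorana N D \<beta> * diff_monom \<alpha> \<beta> m)"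
  define M where "M = (\<lambda>i j. monom4 (0,0,0,0)
       (of_nat (fact j * fact (N-j) * fact i * fact (N-i))) m)"
  have finS: "finite S" by (simp add: S_def)
  have finA: "finite A" by (simp add: A_def finS)
  have injh: "inj_on h S" unfolding h_def S_def by (rule inj_idx)
  have supp: "{p. g p \<noteq> 0} \<subseteq> A \<times> A"
  proof
    fix p assume "p \<in> {p. g p \<noteq> 0}"
    then obtain \<alpha> \<beta> where p: "p = (\<alpha>, \<beta>)" and ne: "g (\<alpha>, \<beta>) \<noteq> 0" by (cases p) auto
    from ne have "majorana N C \<alpha> \<noteq> 0" "majorana N D \<beta> \<noteq> 0" by (auto simp: g_def)
    then have "\<alpha> \<in> A" "\<beta> \<in> A" using maj_out unfolding A_def h_def S_def by blast+
    then show "p \<in> A \<times> A" using p by simp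
  qed
  have "apply_diffop (majorana N C) (majorana N D) m = Sum_any g"
    by (simp add: apply_diffop_def g_def)
  also have "\<dots> = sum g (A \<times> A)"
    by (rule Sum_any.expand_superset) (use finA supp in auto)
  also have "\<dots> = (\<Sum>\<alpha>\<in>A. \<Sum>\<beta>\<in>A. g (\<alpha>, \<beta>))"
    by (simp add: sum.cartesian_product)
  also have "\<dots> = (\<Sum>p\<in>S. \<Sum>q\<in>S. g (h p, h q))"
    unfolding A_def using injh by (simp add: sum.reindex)
  also have "\<dots> = (\<Sum>p\<in>S. \<Sum>q\<in>S. if q = (snd p, fst p) then
       (wt N (fst p) * C (fst p) (snd p) * wt N (snd p)) *
       (wt N (snd p) * D (snd p) (fst p) * wt N (fst p)) * M (fst p) (snd p) else 0)"
  proof (intro sum.cong refl)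
    fix p q assume "p \<in> S" "q \<in> S"
    then obtain i j k l where pq: "p = (i,j)" "q = (k,l)" "i \<le> N" "j \<le> N" "k \<le> N" "l \<le> N"
      unfolding S_def by auto
    show "g (h p, h q) = (if q = (snd p, fst p) then
       (wt N (fst p) * C (fst p) (snd p) * wt N (snd p)) *
       (wt N (snd p) * D (snd p) (fst p) * wt N (fst p)) * M (fst p) (snd p) else 0)"
      using pq by (auto simp: g_def h_def maj_at dm_at M_def)
  qed
  also have "\<dots> = (\<Sum>p\<in>S. (wt N (fst p) * C (fst p) (snd p) * wt N (snd p)) *
       (wt N (snd p) * D (snd p) (fst p) * wt N (fst p)) * M (fst p) (snd p))"
    by (rule sum.cong[OF refl]) (auto simp: S_def sum.delta' finS)
  also have "\<dots> = (\<Sum>p\<in>S. (if m = (0,0,0,0) then (of_nat (fact N))\<^sup>2 else 0) *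
       (C (fst p) (snd p) * D (snd p) (fst p)))"
  proof (rule sum.cong[OF refl])
    fix p assume "p \<in> S"
    then obtain i j where p: "p = (i,j)" "i \<le> N" "j \<le> N" unfolding S_def by auto
    have e: "wt N i * C i j * wt N j * (wt N j * D j i * wt N i) *
        of_nat (fact j * fact (N-j) * fact i * fact (N-i))
      = (wt N i * wt N i * of_nat (fact i * fact (N - i))) *
        (wt N j * wt N j * of_nat (fact j * fact (N - j))) * (C i j * D j i)"
      by (simp add: algebra_simps)
    show "(wt N (fst p) * C (fst p) (snd p) * wt N (snd p)) *
       (wt N (snd p) * D (snd p) (fst p) * wt N (fst p)) * M (fst p) (snd p) =
       (if m = (0,0,0,0) then (of_nat (fact N))\<^sup>2 else 0) *
       (C (fst p) (snd p) * D (snd p) (fst p))"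
    proof (cases "m = (0,0,0,0)")
      case True
      have "M i j = of_nat (fact j * fact (N-j) * fact i * fact (N-i))"
        using True by (simp add: M_def monom4_def)
      then have "(wt N i * C i j * wt N j) * (wt N j * D j i * wt N i) * M i j
          = (wt N i * wt N i * of_nat (fact i * fact (N - i))) *
        (wt N j * wt N j * of_nat (fact j * fact (N - j))) * (C i j * D j i)"
        using e by simp
      also have "\<dots> = (of_nat (fact N))\<^sup>2 * (C i j * D j i)"
        by (simp only: wt_sq p power2_eq_square)
      finally show ?thesis using p True by simp
    next
      case False
      then show ?thesis using p by (simp add: M_def monom4_def)
    qed
  qed
  also have "\<dots> = (if m = (0,0,0,0) then (of_nat (fact N))\<^sup>2 else 0) *
       (\<Sum>p\<in>S. C (fst p) (snd p) * D (snd p) (fst p))"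
    by (simp add: sum_distrib_left)
  also have "(\<Sum>p\<in>S. C (fst p) (snd p) * D (snd p) (fst p)) = op_trace N (op_comp N C D)"
    unfolding S_def op_trace_def op_comp_def
    by (simp add: sum.cartesian_product split_def)
  finally show ?thesis by simp
qed

theorem lemma2:
  fixes N :: nat and C D :: "nat \<Rightarrow> nat \<Rightarrow> complex"
  assumes "N \<ge> 1"
  shows "const4 (op_trace N (op_comp N C D))
           = (\<lambda>m. (1 / (of_nat (fact N))\<^sup>2) * apply_diffop (majorana N C) (majorana N D) m)
       \<and> (op_trace N (op_comp N C D) = 0
           \<longrightarrow> apply_diffop (majorana N C) (majorana N D) = (\<lambda>_. 0))"
proof
  have nz: "(of_nat (fact N) :: complex)\<^sup>2 \<noteq> 0" by simp
  show "const4 (op_trace N (op_comp N C D))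
           = (\<lambda>m. (1 / (of_nat (fact N))\<^sup>2) * apply_diffop (majorana N C) (majorana N D) m)"
    using nz by (auto simp: key const4_def monom4_def fun_eq_iff)
  show "op_trace N (op_comp N C D) = 0
           \<longrightarrow> apply_diffop (majorana N C) (majorana N D) = (\<lambda>_. 0)"
    by (auto simp: key fun_eq_iff)
qed

end
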